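(* Let $R$ be a ring with unity and involution $*$, and let $a,b,c\in R$. Then $a$ is left dual $(b,c)$-core invertible if and only if $ab$ is strongly left $(b^*,c)$-invertible.
   Context: For $u,b,c\in R$, $u$ is left dual $(b,c)$-core invertible if there exists $x\in Rc$ with $bxub=b$ and $(xub)^*=xub$. $u$ is strongly left $(b,c)$-invertible if $b\in Rcub$ and $cub$ is regular (i.e. there exists $z$ with $cub\,z\,cub=cub$); equivalently there exists $x\in R$ with $xux=x$, $xR=bR$ and $Rx\subseteq Rc$. *)

theory Defs
  imports Main
begin

definition involution :: "('a::ring_1 \<Rightarrow> 'a) \<Rightarrow> bool" where
  "involution s \<longleftrightarrow>
     (\<forall>x y. s (x + y) = s x + s y) \<and>
     (\<forall>x y. s (x * y) = s y * s x) \<and>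
     (\<forall>x. s (s x) = x)"

definition left_dual_core_inv :: "('a::ring_1 \<Rightarrow> 'a) \<Rightarrow> 'a \<Rightarrow> 'a \<Rightarrow> 'a \<Rightarrow> bool" where
  "left_dual_core_inv s u b c \<longleftrightarrow>
     (\<exists>x. (\<exists>r. x = r * c) \<and> b * x * u * b = b \<and> s (x * u * b) = x * u * b)"

definition strongly_left_inv :: "'a::ring_1 \<Rightarrow> 'a \<Rightarrow> 'a \<Rightarrow> bool" where
  "strongly_left_inv u b c \<longleftrightarrow>
     (\<exists>r. b = r * (c * u * b)) \<and> (\<exists>z. (c * u * b) * z * (c * u * b) = c * u * b)"

end

theory Submission
  imports Defs
begin

theorem theorem3p12:
  fixes s :: "'a::ring_1 \<Rightarrow> 'a" and a b c :: 'a
  assumes "involution s"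
  shows "left_dual_core_inv s a b c \<longleftrightarrow> strongly_left_inv (a * b) (s b) c"
proof -
  have sm: "\<And>x y. s (x * y) = s y * s x" and ss: "\<And>x. s (s x) = x"
    using assms unfolding involution_def by auto
  show ?thesis
  proof
    assume "left_dual_core_inv s a b c"
    then obtain t where b1: "b * (t*c) * a * b = b" and h: "s (t*c * a * b) = t*c * a * b"
      unfolding left_dual_core_inv_def by blast
    have e1: "s b = t * (c * (a * b) * s b)"
    proof -
      have "s b = s (b * (t*c*a*b))" using b1 by (simp add: mult.assoc)
      also have "\<dots> = (t*c*a*b) * s b" using h sm by simp
      finally show ?thesis by (simp add: mult.assoc)
    qed
    have e2: "b * s b * s a * s (t*c) = b"
    proof -
      have "b * s b * s a * s (t*c) = b * s (t*c*a*b)" using sm by (simp add: mult.assoc)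
      also have "\<dots> = b" using h b1 by (simp add: mult.assoc)
      finally show ?thesis .
    qed
    let ?w = "c * (a * b) * s b"
    have "?w * (s a * s (t*c) * t) * ?w = ?w"
    proof -
      have "?w * (s a * s (t*c) * t) * ?w = c * a * (b * s b * s a * s (t*c)) * (t * ?w)"
        by (simp add: mult.assoc)
      also have "\<dots> = c * a * b * s b" using e2 e1[symmetric] by simp
      finally show ?thesis by (simp add: mult.assoc)
    qed
    then show "strongly_left_inv (a * b) (s b) c"
      unfolding strongly_left_inv_def using e1 by blast
  next
    assume "strongly_left_inv (a * b) (s b) c"
    then obtain r where e: "s b = r * (c * (a * b) * s b)"
      unfolding strongly_left_inv_def by blast
    define h where "h = r * c * a * b"
    have hb: "s b = h * s b" using e by (simp add: h_def mult.assoc)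
    have bh: "b = b * s h"
    proof -
      have "b = s (s b)" using ss by simp
      also have "\<dots> = s (h * s b)" using hb by simp
      also have "\<dots> = b * s h" using sm ss by simp
      finally show ?thesis .
    qed
    have hsh: "h * s h = s h"
    proof -
      have "h * s h = h * s b * s (r*c*a)" by (simp add: h_def sm mult.assoc)
      also have "\<dots> = s b * s (r*c*a)" using hb by simp
      also have "\<dots> = s h" by (simp add: h_def sm mult.assoc)
      finally show ?thesis .
    qed
    have hs: "s h = h"
    proof -
      have "s (h * s h) = h * s h" using sm ss by (simp add: mult.assoc)
      then have "s (s h) = s h" using hsh by simp
      then show ?thesis using ss by simp
    qed
    have "b * (r*c) * a * b = b" using bh hs by (simp add: h_def mult.assoc)
    moreover have "s (r*c * a * b) = r*c * a * b" using hs by (simp add: h_def)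
    ultimately show "left_dual_core_inv s a b c"
      unfolding left_dual_core_inv_def by blast
  qed
qed

end
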